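(* Let $p>0$, $0<\alpha<p$, $0<\ell\le\infty$, and let $f$ be a measurable, non-negative, non-increasing function on $(0,\ell)$. (a) If $p\ge1$, then $$\int_0^\ell\Big(\int_0^x f(y)dy\Big)^p x^{-\alpha}\frac{dx}{x}\ge\frac p\alpha\int_0^\ell (xf(x))^p x^{-\alpha}\Big(1-\Big(\frac x\ell\Big)^\alpha\Big)\frac{dx}{x}.$$ (b) If $0<p\le1$, this inequality holds in the reversed direction. (c) The constant $p/\alpha$ is sharp in both (a) and (b); equality holds for every function $f=A\chi_{(0,c)}$ with $c\in(0,\ell)$ and $A>0$.
   Context: When $\ell=\infty$, $(x/\ell)^\alpha$ is interpreted as $0$. $\chi_E$ denotes the indicator function of $E$. *)

theory Defs
  imports "HOL-Analysis.Analysis"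
begin

definition ivl :: "ereal \<Rightarrow> real set" where
  "ivl l = {x. 0 < x \<and> ereal x < l}"

definition epowr :: "ennreal \<Rightarrow> real \<Rightarrow> ennreal" where
  "epowr a p = (if a = top then top else ennreal (enn2real a powr p))"

definition wt :: "ereal \<Rightarrow> real \<Rightarrow> real \<Rightarrow> real" where
  "wt l \<alpha> x = (if l = \<infinity> then 1 else 1 - (x / real_of_ereal l) powr \<alpha>)"

definition admissible :: "ereal \<Rightarrow> (real \<Rightarrow> real) \<Rightarrow> bool" where
  "admissible l f \<longleftrightarrow>
     f \<in> borel_measurable (restrict_space lborel (ivl l)) \<and>
     (\<forall>x\<in>ivl l. 0 \<le> f x) \<and>
     (\<forall>x\<in>ivl l. \<forall>y\<in>ivl l. x \<le> y \<longrightarrow> f y \<le> f x)"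

definition hardyL :: "real \<Rightarrow> real \<Rightarrow> ereal \<Rightarrow> (real \<Rightarrow> real) \<Rightarrow> ennreal" where
  "hardyL p \<alpha> l f =
     (\<integral>\<^sup>+ x\<in>ivl l. epowr (\<integral>\<^sup>+ y\<in>{0<..<x}. ennreal (f y) \<partial>lborel) p
                     * ennreal (x powr (-\<alpha>) / x) \<partial>lborel)"

definition hardyR :: "real \<Rightarrow> real \<Rightarrow> ereal \<Rightarrow> (real \<Rightarrow> real) \<Rightarrow> ennreal" where
  "hardyR p \<alpha> l f =
     (\<integral>\<^sup>+ x\<in>ivl l. ennreal ((x * f x) powr p * x powr (-\<alpha>) * wt l \<alpha> x / x) \<partial>lborel)"

end

theory Submission
  imports Defs
begin

lemma countable_negligible_real: "countable (D::real set) \<Longrightarrow> negligible D"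
proof -
  assume D: "countable D"
  have "D = \<Union>((\<lambda>d. {d}) ` D)" by auto
  moreover have "negligible (\<Union>((\<lambda>d. {d}) ` D))"
    by (rule negligible_countable_Union) (use D in auto)
  ultimately show ?thesis by simp
qed

lemma borel_lebesgue_sets: "A \<in> sets borel \<Longrightarrow> (A::real set) \<in> sets lebesgue"
  by (metis sets_completionI_sets sets_lborel)

lemma core:
  fixes f :: "real \<Rightarrow> real" and x p I :: real
  assumes x: "0 < x" and p: "0 < p"
    and meas: "(\<lambda>y. f y * indicator {0<..<x} y) \<in> borel_measurable borel"
    and nonneg: "\<And>y. 0 < y \<Longrightarrow> y < x \<Longrightarrow> 0 \<le> f y"
    and mono: "\<And>y z. 0 < y \<Longrightarrow> y \<le> z \<Longrightarrow> z < x \<Longrightarrow> f z \<le> f y"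
    and fin: "(\<integral>\<^sup>+y\<in>{0<..<x}. ennreal (f y) \<partial>lborel) = ennreal I" and I0: "0 \<le> I"
  obtains S F where "S \<subseteq> {0<..<x}"
    "\<And>t. t \<in> S \<Longrightarrow> 0 < f t \<and> t * f t \<le> F t"
    "\<And>t. t \<in> S \<Longrightarrow> ennreal (F t) = (\<integral>\<^sup>+y\<in>{0<..<t}. ennreal (f y) \<partial>lborel)"
    "(\<integral>\<^sup>+y\<in>{0<..<x}. ennreal (p * y powr (p-1) * f y powr p) \<partial>lborel)
       = (\<integral>\<^sup>+y\<in>S. ennreal (p * y powr (p-1) * f y powr p) \<partial>lborel)"
    "ennreal (I powr p) = (\<integral>\<^sup>+y\<in>S. ennreal (f y * p * F y powr (p-1)) \<partial>lborel)"
proof -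
  define fh where "fh y = f y * indicator {0<..<x} y" for y
  have fh_nn: "0 \<le> fh y" for y using nonneg by (auto simp: fh_def indicator_def)
  have fh_eq: "fh y = f y" if "0 < y" "y < x" for y using that by (simp add: fh_def)
  have fh_meas[measurable]: "fh \<in> borel_measurable borel" using meas by (simp add: fh_def[abs_def])
  have "(\<integral>\<^sup>+y. ennreal (fh y) \<partial>lborel) = ennreal I"
    unfolding fin[symmetric] by (rule nn_integral_cong) (auto simp: fh_def indicator_def)
  hence fh_int: "(fh has_integral I) UNIV"
    by (intro nn_integral_has_integral) (auto simp: fh_nn I0)
  have intt: "fh integrable_on {a..b}" for a b
    using fh_int integrable_on_subinterval by blast
  define F where "F t = integral {0..t} fh" for t
  have F0: "F 0 = 0" by (simp add: F_def)
  have "((\<lambda>y. if y \<in> {0..x} then fh y else 0) has_integral I) UNIV"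
    using fh_int by (rule has_integral_eq[rotated]) (auto simp: fh_def)
  hence "(fh has_integral I) {0..x}" by (simp only: has_integral_restrict_UNIV)
  hence Fx: "F x = I" by (simp add: F_def integral_unique)
  have Fcomb: "F t = F s + integral {s..t} fh" if "0 \<le> s" "s \<le> t" for s t
    using Henstock_Kurzweil_Integration.integral_combine[OF that intt] by (simp add: F_def)
  have Fmono: "F s \<le> F t" if "0 \<le> s" "s \<le> t" for s t
    using Fcomb[OF that] integral_nonneg[OF intt, of s t] fh_nn by force
  have Fnn: "0 \<le> F t" if "0 \<le> t" for t using Fmono[of 0 t] that F0 by simp
  have Fcont: "continuous_on {0..x} F"
    unfolding F_def[abs_def] by (rule indefinite_integral_continuous_1[OF intt])
  define D where "D = {t \<in> {0<..<x}. \<not> isCont fh t}"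
  have "mono_on {0<..<x} (\<lambda>y. - fh y)"
    by (auto simp: mono_on_def fh_eq intro!: mono)
  hence "countable {t \<in> {0<..<x}. \<not> isCont (\<lambda>y. - fh y) t}"
    by (intro mono_on_ctble_discont_open) auto
  moreover have "isCont (\<lambda>y. - fh y) t \<longleftrightarrow> isCont fh t" for t
    using continuous_minus[of "at t" "\<lambda>y. - fh y"] continuous_minus[of "at t" fh] by auto
  ultimately have Dc: "countable D" by (simp add: D_def)
  define P where "P = {t \<in> {0<..<x}. 0 < f t}"
  define S where "S = P - D"
  have S_sub: "S \<subseteq> {0<..<x}" by (auto simp: S_def P_def)
  have "P = {t \<in> space borel. 0 < fh t} \<inter> {0<..<x}" by (auto simp: P_def fh_def)
  also have "\<dots> \<in> sets borel" by measurable
  finally have Pb: "P \<in> sets borel" .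
  have Db: "D \<in> sets borel" by (rule sets.countable[OF _ Dc]) auto
  have Sb: "S \<in> sets borel" using Pb Db by (simp add: S_def)
  have Sl: "S \<in> sets lebesgue" using Sb by (rule borel_lebesgue_sets)
  have deriv: "(F has_real_derivative fh t) (at t within S)" if t: "t \<in> S" for t
  proof -
    have t0: "t \<in> {0<..<x}" "isCont fh t" using t by (auto simp: S_def P_def D_def)
    have "continuous (at t within {0..x} - {}) fh"
      using t0(2) continuous_at_imp_continuous_at_within by blast
    hence "((\<lambda>u. integral {0..u} fh) has_vector_derivative fh t) (at t within {0..x} - {})"
      by (intro integral_has_vector_derivative_continuous_at intt) (use t0 in auto)
    moreover have "S \<subseteq> {0..x} - {}" using S_sub by auto
    ultimately have "(F has_vector_derivative fh t) (at t within S)"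
      unfolding F_def[abs_def] by (rule has_vector_derivative_within_subset)
    thus ?thesis by (simp add: has_real_derivative_iff_has_vector_derivative)
  qed
  have strict: "F s < F t" if "s \<in> S" "t \<in> S" "s < t" for s t
  proof -
    have st: "0 < s" "t < x" "0 < f t" using that S_sub by (auto simp: S_def P_def)
    have "integral {s..t} (\<lambda>_. f t) \<le> integral {s..t} fh"
      by (rule integral_le[OF integrable_const_ivl intt]) (use st that in \<open>auto simp: fh_eq intro!: mono\<close>)
    moreover have "integral {s..t} (\<lambda>_. f t) = (t - s) * f t" using that by simp
    moreover have "0 < (t - s) * f t" using st that by simp
    ultimately show ?thesis using Fcomb[of s t] st that by linarith
  qed
  have inj: "inj_on F S"
    by (rule inj_onI) (metis linorder_neqE_linordered_idom strict less_irrefl)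
  have lower: "t * f t \<le> F t" if "t \<in> S" for t
  proof -
    have st: "0 < t" "t < x" using that S_sub by auto
    have "integral {0<..<t} (\<lambda>_. f t) \<le> integral {0<..<t} fh"
    proof (rule integral_le)
      show "(\<lambda>_. f t) integrable_on {0<..<t}"
        using integrable_const_ivl[of "f t" 0 t] by (simp add: integrable_on_open_interval_real)
      show "fh integrable_on {0<..<t}"
        using intt[of 0 t] by (simp add: integrable_on_open_interval_real)
    qed (use st in \<open>auto simp: fh_eq intro!: mono\<close>)
    thus ?thesis using st by (simp add: F_def integral_open_interval_real[symmetric])
  qed
  show ?thesis
  proof
    show "S \<subseteq> {0<..<x}" by (rule S_sub)
  next
    fix t assume "t \<in> S"
    thus "0 < f t \<and> t * f t \<le> F t" using lower by (auto simp: S_def P_def)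
  next
    fix t assume t: "t \<in> S"
    hence st: "0 < t" "t < x" using S_sub by auto
    have "(fh has_integral F t) {0..t}" unfolding F_def using intt by blast
    hence "(\<integral>\<^sup>+y\<in>{0..t}. ennreal (fh y) \<partial>lborel) = ennreal (F t)"
      by (intro nn_integral_has_integral_lebesgue') (auto simp: fh_nn)
    moreover have "(\<integral>\<^sup>+y\<in>{0..t}. ennreal (fh y) \<partial>lborel) = (\<integral>\<^sup>+y\<in>{0<..<t}. ennreal (f y) \<partial>lborel)"
    proof (rule nn_integral_cong_AE)
      show "AE y in lborel. ennreal (fh y) * indicator {0..t} y = ennreal (f y) * indicator {0<..<t} y"
        using AE_lborel_singleton[of 0] AE_lborel_singleton[of t]
        by eventually_elim (use st in \<open>auto simp: fh_def indicator_def\<close>)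
    qed
    ultimately show "ennreal (F t) = (\<integral>\<^sup>+y\<in>{0<..<t}. ennreal (f y) \<partial>lborel)" by simp
  next
    show "(\<integral>\<^sup>+y\<in>{0<..<x}. ennreal (p * y powr (p-1) * f y powr p) \<partial>lborel)
       = (\<integral>\<^sup>+y\<in>S. ennreal (p * y powr (p-1) * f y powr p) \<partial>lborel)"
    proof (rule nn_integral_cong_AE)
      have "AE y in lborel. y \<notin> D" by (rule AE_not_in[OF countable_imp_null_set_lborel[OF Dc]])
      thus "AE y in lborel. ennreal (p * y powr (p-1) * f y powr p) * indicator {0<..<x} y
           = ennreal (p * y powr (p-1) * f y powr p) * indicator S y"
      proof eventually_elim
        case (elim y)
        show ?case
        proof (cases "y \<in> {0<..<x}")
          case True
          show ?thesis
          proof (cases "0 < f y")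
            case True
            thus ?thesis using elim \<open>y \<in> {0<..<x}\<close> by (simp add: S_def P_def indicator_def)
          next
            case False
            hence "f y = 0" using nonneg[of y] \<open>y \<in> {0<..<x}\<close> by auto
            thus ?thesis by simp
          qed
        next
          case False
          thus ?thesis using S_sub by (auto simp: indicator_def)
        qed
      qed
    qed
  next
    define \<psi> where "\<psi> u = p * u powr (p - 1)" for u
    have "((\<lambda>u. u powr (p - 1)) has_integral (I powr (p - 1 + 1) / (p - 1 + 1))) {0..I}"
      by (rule has_integral_powr_from_0) (use p I0 in auto)
    hence "(\<psi> has_integral p * (I powr p / p)) {0..I}"
      unfolding \<psi>_def[abs_def] by (intro has_integral_mult_right) simp
    hence psi_int: "(\<psi> has_integral I powr p) {0..I}" using p by simp
    have img1: "F ` S \<subseteq> {0..I}"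
      using S_sub Fnn Fmono[of _ x] Fx by force
    have img2: "{0..I} - F ` S \<subseteq> {0, I} \<union> F ` D"
    proof
      fix u assume u: "u \<in> {0..I} - F ` S"
      show "u \<in> {0, I} \<union> F ` D"
      proof (cases "u = 0 \<or> u = I")
        case True thus ?thesis by auto
      next
        case False
        hence u': "0 < u" "u < I" using u by auto
        obtain t where t: "0 \<le> t" "t \<le> x" "F t = u"
          using IVT'[of F 0 u x] u' F0 Fx Fcont x by auto
        have t0: "t \<noteq> 0" "t \<noteq> x" using t u' F0 Fx by auto
        have "0 < f t"
        proof (rule ccontr)
          assume "\<not> 0 < f t"
          hence ft: "f t = 0" using nonneg[of t] t t0 by auto
          have "integral {t..x} fh = integral {t..x} (\<lambda>_. 0::real)"
          proof (rule integral_cong)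
            fix y assume y: "y \<in> {t..x}"
            show "fh y = 0"
            proof (cases "y < x")
              case True
              hence "f y \<le> f t" using y t t0 by (intro mono) auto
              moreover have "0 \<le> f y" using True y t t0 by (intro nonneg) auto
              ultimately show ?thesis using ft by (simp add: fh_def)
            next
              case False thus ?thesis by (simp add: fh_def)
            qed
          qed
          hence "F x = F t" using Fcomb[of t x] t by simp
          thus False using t u' Fx by simp
        qed
        hence "t \<in> P" using t t0 by (auto simp: P_def)
        thus ?thesis using u t by (auto simp: S_def)
      qed
    qed
    have negl: "negligible ({0, I} \<union> F ` D)"
      by (rule countable_negligible_real) (use Dc in auto)
    have psiT: "(\<psi> has_integral I powr p) (F ` S)"
    proof -
      have "(\<psi> has_integral I powr p) {0..I} = (\<psi> has_integral I powr p) (F ` S)"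
      proof (rule has_integral_spike_set_eq)
        have "{u \<in> F ` S - {0..I}. \<psi> u \<noteq> 0} = {}" using img1 by auto
        thus "negligible {u \<in> {0..I} - F ` S. \<psi> u \<noteq> 0}"
          by (intro negligible_subset[OF negl]) (use img2 in auto)
        show "negligible {u \<in> F ` S - {0..I}. \<psi> u \<noteq> 0}"
          by (subst \<open>{u \<in> F ` S - {0..I}. \<psi> u \<noteq> 0} = {}\<close>) (rule negligible_empty)
      qed
      thus ?thesis using psi_int by simp
    qed
    have psi_nn: "0 \<le> \<psi> u" for u using p by (simp add: \<psi>_def)
    have "\<psi> absolutely_integrable_on F ` S"
      using psiT psi_nn by (intro nonnegative_absolutely_integrable_1) (auto simp: integrable_on_def)
    moreover have "integral (F ` S) \<psi> = I powr p" using psiT by (rule integral_unique)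
    ultimately have cv: "(\<lambda>t. \<bar>fh t\<bar> *\<^sub>R \<psi> (F t)) absolutely_integrable_on S \<and>
        integral S (\<lambda>t. \<bar>fh t\<bar> *\<^sub>R \<psi> (F t)) = I powr p"
      using has_absolute_integral_change_of_variables_real[OF Sl deriv inj, of \<psi> "I powr p"] by blast
    hence "((\<lambda>t. \<bar>fh t\<bar> *\<^sub>R \<psi> (F t)) has_integral I powr p) S"
      using set_lebesgue_integral_eq_integral(1) integrable_integral by fastforce
    hence "(\<integral>\<^sup>+t\<in>S. ennreal (\<bar>fh t\<bar> *\<^sub>R \<psi> (F t)) \<partial>lborel) = ennreal (I powr p)"
      by (intro nn_integral_has_integral_lebesgue') (auto simp: psi_nn)
    moreover have "(\<integral>\<^sup>+t\<in>S. ennreal (\<bar>fh t\<bar> *\<^sub>R \<psi> (F t)) \<partial>lborel)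
        = (\<integral>\<^sup>+y\<in>S. ennreal (f y * p * F y powr (p-1)) \<partial>lborel)"
    proof (rule nn_integral_cong)
      fix t
      show "ennreal (\<bar>fh t\<bar> *\<^sub>R \<psi> (F t)) * indicator S t = ennreal (f t * p * F t powr (p-1)) * indicator S t"
      proof (cases "t \<in> S")
        case True
        hence "fh t = f t" "0 \<le> f t" using S_sub fh_eq[of t] fh_nn[of t] by auto
        thus ?thesis using True by (simp add: \<psi>_def mult.assoc)
      qed simp
    qed
    ultimately show "ennreal (I powr p) = (\<integral>\<^sup>+y\<in>S. ennreal (f y * p * F y powr (p-1)) \<partial>lborel)"
      by simp
  qed
qed

lemma ivl_eq: "0 < l \<Longrightarrow> ivl l = (if l = \<infinity> then {0<..} else {0<..<real_of_ereal l})"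
  by (cases l) (auto simp: ivl_def)

lemma ivl_borel: "0 < l \<Longrightarrow> ivl l \<in> sets borel"
  by (simp add: ivl_eq)

lemma wt_bounds:
  assumes "0 < \<alpha>" "0 < l" "y \<in> ivl l"
  shows "0 < wt l \<alpha> y" "wt l \<alpha> y \<le> 1"
proof -
  have y: "0 < y" using assms by (auto simp: ivl_def)
  show "0 < wt l \<alpha> y"
  proof (cases "l = \<infinity>")
    case False
    then obtain L where L: "l = ereal L" using assms by (cases l) auto
    hence yL: "y < L" using assms by (auto simp: ivl_def)
    have "(y / L) powr \<alpha> < 1 powr \<alpha>"
      using y yL assms by (intro powr_less_mono2) auto
    thus ?thesis using L by (simp add: wt_def)
  qed (simp add: wt_def)
  show "wt l \<alpha> y \<le> 1" by (simp add: wt_def)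
qed

lemma inner:
  assumes a: "0 < \<alpha>" and l: "0 < l" and y: "y \<in> ivl l"
  shows "(\<integral>\<^sup>+x. ennreal (x powr (-\<alpha>) / x) * indicator (ivl l) x * indicator {0<..<x} y \<partial>lborel)
         = ennreal (y powr (-\<alpha>) * wt l \<alpha> y / \<alpha>)"
proof -
  have y0: "0 < y" using y by (simp add: ivl_def)
  have pw: "x powr (-\<alpha>) / x = x powr (-\<alpha> - 1)" if "0 < x" for x :: real
    using that by (simp add: powr_diff)
  show ?thesis
  proof (cases "l = \<infinity>")
    case True
    have "((\<lambda>x. x powr (-\<alpha> - 1)) has_integral -(y powr (-\<alpha> - 1 + 1)) / (-\<alpha> - 1 + 1)) {y..}"
      by (rule has_integral_powr_to_inf) (use a y0 in auto)
    hence "(\<integral>\<^sup>+x\<in>{y..}. ennreal (x powr (-\<alpha> - 1)) \<partial>lborel) = ennreal (-(y powr (-\<alpha> - 1 + 1)) / (-\<alpha> - 1 + 1))"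
      by (intro nn_integral_has_integral_lebesgue') auto
    moreover have "(\<integral>\<^sup>+x. ennreal (x powr (-\<alpha>) / x) * indicator (ivl l) x * indicator {0<..<x} y \<partial>lborel)
        = (\<integral>\<^sup>+x\<in>{y..}. ennreal (x powr (-\<alpha> - 1)) \<partial>lborel)"
    proof (rule nn_integral_cong_AE)
      show "AE x in lborel. ennreal (x powr (-\<alpha>) / x) * indicator (ivl l) x * indicator {0<..<x} y
          = ennreal (x powr (-\<alpha> - 1)) * indicator {y..} x"
        using AE_lborel_singleton[of y]
        by eventually_elim (use y0 True in \<open>auto simp: ivl_def indicator_def pw\<close>)
    qed
    ultimately show ?thesis using True a by (simp add: wt_def)
  next
    case False
    then obtain L where L: "l = ereal L" using l by (cases l) auto
    hence yL: "y < L" using y by (auto simp: ivl_def)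
    define G where "G t = - (t powr (-\<alpha>)) / \<alpha>" for t :: real
    have "((\<lambda>x. x powr (-\<alpha> - 1)) has_integral (G L - G y)) {y..L}"
    proof (rule fundamental_theorem_of_calculus)
      show "y \<le> L" using yL by simp
      fix t assume t: "t \<in> {y..L}"
      hence t0: "0 < t" using y0 by auto
      have "(G has_real_derivative t powr (-\<alpha> - 1)) (at t)"
        unfolding G_def using t0 a
        by (auto intro!: derivative_eq_intros simp: field_simps)
      thus "(G has_vector_derivative t powr (-\<alpha> - 1)) (at t within {y..L})"
        by (simp add: has_real_derivative_iff_has_vector_derivative has_vector_derivative_at_within)
    qed
    hence "(\<integral>\<^sup>+x\<in>{y..L}. ennreal (x powr (-\<alpha> - 1)) \<partial>lborel) = ennreal (G L - G y)"
      by (intro nn_integral_has_integral_lebesgue') auto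
    moreover have "(\<integral>\<^sup>+x. ennreal (x powr (-\<alpha>) / x) * indicator (ivl l) x * indicator {0<..<x} y \<partial>lborel)
        = (\<integral>\<^sup>+x\<in>{y..L}. ennreal (x powr (-\<alpha> - 1)) \<partial>lborel)"
    proof (rule nn_integral_cong_AE)
      show "AE x in lborel. ennreal (x powr (-\<alpha>) / x) * indicator (ivl l) x * indicator {0<..<x} y
          = ennreal (x powr (-\<alpha> - 1)) * indicator {y..L} x"
        using AE_lborel_singleton[of y] AE_lborel_singleton[of L]
        by eventually_elim (use y0 L in \<open>auto simp: ivl_def indicator_def pw\<close>)
    qed
    moreover have "G L - G y = y powr (-\<alpha>) * wt l \<alpha> y / \<alpha>"
    proof -
      have "y powr (-\<alpha>) * (y / L) powr \<alpha> = L powr (-\<alpha>)"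
        using y0 yL by (simp add: powr_divide powr_minus field_simps)
      thus ?thesis using L a by (simp add: G_def wt_def field_simps)
    qed
    ultimately show ?thesis by simp
  qed
qed

lemma tonelli:
  fixes g :: "real \<Rightarrow> real"
  assumes gm[measurable]: "g \<in> borel_measurable borel" and a: "0 < \<alpha>" and l: "0 < l"
  shows "(\<integral>\<^sup>+x\<in>ivl l. (\<integral>\<^sup>+y\<in>{0<..<x}. ennreal (g y) \<partial>lborel) * ennreal (x powr (-\<alpha>) / x) \<partial>lborel)
       = (\<integral>\<^sup>+y\<in>ivl l. ennreal (g y) * ennreal (y powr (-\<alpha>) * wt l \<alpha> y / \<alpha>) \<partial>lborel)"
proof -
  have PS: "pair_sigma_finite (lborel::real measure) (lborel::real measure)"
    by (simp add: pair_sigma_finite_def lborel.sigma_finite_measure_axioms)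
  have [measurable]: "ivl l \<in> sets borel" using l by (simp add: ivl_borel)
  define H where "H x y = ennreal (g y) * ennreal (x powr (-\<alpha>) / x) * indicator (ivl l) x * indicator {0<..<x} y"
    for x y :: real
  have fstm[measurable]: "(fst :: real \<times> real \<Rightarrow> real) \<in> borel_measurable (lborel \<Otimes>\<^sub>M lborel)"
    using measurable_fst[of lborel lborel] by (simp add: measurable_def space_pair_measure sets_lborel)
  have sndm[measurable]: "(snd :: real \<times> real \<Rightarrow> real) \<in> borel_measurable (lborel \<Otimes>\<^sub>M lborel)"
    using measurable_snd[of lborel lborel] by (simp add: measurable_def space_pair_measure sets_lborel)
  have ivlm[measurable]: "ivl l \<in> sets lborel" using l by (simp add: ivl_borel)
  have indx: "(indicator {0<..<x} y :: ennreal) = indicator {0<..} y * indicator {y<..} x" for x y :: real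
    by (auto simp: indicator_def)
  have indm: "(\<lambda>z::real\<times>real. indicator {0<..<fst z} (snd z) :: ennreal) \<in> borel_measurable (lborel \<Otimes>\<^sub>M lborel)"
  proof -
    have "(\<lambda>z::real\<times>real. indicator {0<..<fst z} (snd z) :: ennreal) = indicator {z::real\<times>real. z \<in> space (lborel \<Otimes>\<^sub>M lborel) \<and> 0 < snd z \<and> snd z < fst z}"
      by (auto simp: indicator_def space_pair_measure fun_eq_iff)
    also have "\<dots> \<in> borel_measurable (lborel \<Otimes>\<^sub>M lborel)"
    proof (intro borel_measurable_indicator)
      have A: "Measurable.pred (lborel \<Otimes>\<^sub>M lborel) (\<lambda>z::real\<times>real. snd z < fst z)"
        by (rule borel_measurable_pred_less[OF sndm fstm])
      have B: "Measurable.pred (lborel \<Otimes>\<^sub>M lborel) (\<lambda>z::real\<times>real. 0 < snd z)"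
        by (rule borel_measurable_pred_less[OF _ sndm]) simp
      have "Measurable.pred (lborel \<Otimes>\<^sub>M lborel) (\<lambda>z::real\<times>real. 0 < snd z \<and> snd z < fst z)"
        using pred_intros_logic(3)[OF B A] .
      thus "{z::real\<times>real. z \<in> space (lborel \<Otimes>\<^sub>M lborel) \<and> 0 < snd z \<and> snd z < fst z} \<in> sets (lborel \<Otimes>\<^sub>M lborel)"
        by (simp add: pred_def)
    qed
    finally show ?thesis .
  qed
  have Hm: "(\<lambda>(x, y). H x y) \<in> borel_measurable (lborel \<Otimes>\<^sub>M lborel)"
    unfolding H_def case_prod_beta using indm by measurable
  have "(\<integral>\<^sup>+x\<in>ivl l. (\<integral>\<^sup>+y\<in>{0<..<x}. ennreal (g y) \<partial>lborel) * ennreal (x powr (-\<alpha>) / x) \<partial>lborel)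
      = (\<integral>\<^sup>+x. (\<integral>\<^sup>+y. H x y \<partial>lborel) \<partial>lborel)"
  proof (rule nn_integral_cong)
    fix x :: real
    have "(\<integral>\<^sup>+y. H x y \<partial>lborel)
        = (\<integral>\<^sup>+y. ennreal (g y) * indicator {0<..<x} y * (ennreal (x powr (-\<alpha>) / x) * indicator (ivl l) x) \<partial>lborel)"
      by (rule nn_integral_cong) (simp add: H_def mult_ac)
    also have "\<dots> = (\<integral>\<^sup>+y\<in>{0<..<x}. ennreal (g y) \<partial>lborel) * (ennreal (x powr (-\<alpha>) / x) * indicator (ivl l) x)"
      by (rule nn_integral_multc) measurable
    finally show "(\<integral>\<^sup>+y\<in>{0<..<x}. ennreal (g y) \<partial>lborel) * ennreal (x powr (-\<alpha>) / x) * indicator (ivl l) x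
        = (\<integral>\<^sup>+y. H x y \<partial>lborel)" by (simp add: mult_ac)
  qed
  also have "\<dots> = (\<integral>\<^sup>+y. (\<integral>\<^sup>+x. H x y \<partial>lborel) \<partial>lborel)"
    using pair_sigma_finite.Fubini'[OF PS Hm] by simp
  also have "\<dots> = (\<integral>\<^sup>+y\<in>ivl l. ennreal (g y) * ennreal (y powr (-\<alpha>) * wt l \<alpha> y / \<alpha>) \<partial>lborel)"
  proof (rule nn_integral_cong)
    fix y :: real
    have "(\<integral>\<^sup>+x. H x y \<partial>lborel)
        = (\<integral>\<^sup>+x. ennreal (g y) * (ennreal (x powr (-\<alpha>) / x) * indicator (ivl l) x * indicator {0<..<x} y) \<partial>lborel)"
      by (rule nn_integral_cong) (simp add: H_def mult_ac)
    also have "\<dots> = ennreal (g y) * (\<integral>\<^sup>+x. ennreal (x powr (-\<alpha>) / x) * indicator (ivl l) x * indicator {0<..<x} y \<partial>lborel)"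
      by (rule nn_integral_cmult) (simp only: indx, measurable)
    also have "\<dots> = ennreal (g y) * ennreal (y powr (-\<alpha>) * wt l \<alpha> y / \<alpha>) * indicator (ivl l) y"
    proof (cases "y \<in> ivl l")
      case True
      thus ?thesis using inner[OF a l True] by simp
    next
      case False
      have "(\<integral>\<^sup>+x. ennreal (x powr (-\<alpha>) / x) * indicator (ivl l) x * indicator {0<..<x} y \<partial>lborel) = (\<integral>\<^sup>+x. 0 \<partial>(lborel::real measure))"
      proof (rule nn_integral_cong)
        fix x
        have "\<not> (x \<in> ivl l \<and> 0 < y \<and> y < x)"
          using False by (auto simp: ivl_def) (meson ereal_less_le less_imp_le order_less_le_trans ereal_less_eq(3))
        thus "ennreal (x powr (-\<alpha>) / x) * indicator (ivl l) x * indicator {0<..<x} y = 0"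
          by (auto simp: indicator_def)
      qed
      thus ?thesis using False by simp
    qed
    finally show "(\<integral>\<^sup>+x. H x y \<partial>lborel) = ennreal (g y) * ennreal (y powr (-\<alpha>) * wt l \<alpha> y / \<alpha>) * indicator (ivl l) y" .
  qed
  finally show ?thesis .
qed

lemma ptw_ineq:
  fixes y a F p :: real
  assumes y: "0 < y" and a: "0 < a" and F: "y * a \<le> F" and p: "0 < p"
  shows "p * y powr (p-1) * a powr p = a * p * (y * a) powr (p - 1)"
    and "1 \<le> p \<Longrightarrow> p * y powr (p-1) * a powr p \<le> a * p * F powr (p - 1)"
    and "p \<le> 1 \<Longrightarrow> a * p * F powr (p - 1) \<le> p * y powr (p-1) * a powr p"
proof -
  have e: "a powr p = a * a powr (p - 1)" using a by (simp add: powr_diff)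
  show eq: "p * y powr (p-1) * a powr p = a * p * (y * a) powr (p - 1)"
    using y a by (simp add: e powr_mult)
  have ya: "0 < y * a" using y a by simp
  show "1 \<le> p \<Longrightarrow> p * y powr (p-1) * a powr p \<le> a * p * F powr (p - 1)"
    unfolding eq using a p ya F by (intro mult_left_mono powr_mono2) auto
  show "p \<le> 1 \<Longrightarrow> a * p * F powr (p - 1) \<le> p * y powr (p-1) * a powr p"
    unfolding eq using a p ya F by (intro mult_left_mono powr_mono2') auto
qed

lemma pw_fin:
  fixes f :: "real \<Rightarrow> real" and x p I :: real
  assumes x: "0 < x" and p: "0 < p"
    and meas: "(\<lambda>y. f y * indicator {0<..<x} y) \<in> borel_measurable borel"
    and nonneg: "\<And>y. 0 < y \<Longrightarrow> y < x \<Longrightarrow> 0 \<le> f y"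
    and mono: "\<And>y z. 0 < y \<Longrightarrow> y \<le> z \<Longrightarrow> z < x \<Longrightarrow> f z \<le> f y"
    and fin: "(\<integral>\<^sup>+y\<in>{0<..<x}. ennreal (f y) \<partial>lborel) = ennreal I" and I0: "0 \<le> I"
  shows "1 \<le> p \<Longrightarrow> (\<integral>\<^sup>+y\<in>{0<..<x}. ennreal (p * y powr (p-1) * f y powr p) \<partial>lborel) \<le> ennreal (I powr p)"
    and "p \<le> 1 \<Longrightarrow> ennreal (I powr p) \<le> (\<integral>\<^sup>+y\<in>{0<..<x}. ennreal (p * y powr (p-1) * f y powr p) \<partial>lborel)"
    and "(\<And>t. 0 < t \<Longrightarrow> t < x \<Longrightarrow> 0 < f t \<Longrightarrow> (\<integral>\<^sup>+y\<in>{0<..<t}. ennreal (f y) \<partial>lborel) = ennreal (t * f t))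
         \<Longrightarrow> (\<integral>\<^sup>+y\<in>{0<..<x}. ennreal (p * y powr (p-1) * f y powr p) \<partial>lborel) = ennreal (I powr p)"
proof -
  obtain S F where S: "S \<subseteq> {0<..<x}"
    and SF: "\<And>t. t \<in> S \<Longrightarrow> 0 < f t \<and> t * f t \<le> F t"
    and Fint: "\<And>t. t \<in> S \<Longrightarrow> ennreal (F t) = (\<integral>\<^sup>+y\<in>{0<..<t}. ennreal (f y) \<partial>lborel)"
    and G: "(\<integral>\<^sup>+y\<in>{0<..<x}. ennreal (p * y powr (p-1) * f y powr p) \<partial>lborel)
       = (\<integral>\<^sup>+y\<in>S. ennreal (p * y powr (p-1) * f y powr p) \<partial>lborel)"
    and E: "ennreal (I powr p) = (\<integral>\<^sup>+y\<in>S. ennreal (f y * p * F y powr (p-1)) \<partial>lborel)"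
    using core[OF x p meas nonneg mono fin I0] by blast
  show "1 \<le> p \<Longrightarrow> (\<integral>\<^sup>+y\<in>{0<..<x}. ennreal (p * y powr (p-1) * f y powr p) \<partial>lborel) \<le> ennreal (I powr p)"
    unfolding G E
  proof (intro nn_integral_mono)
    fix y assume p1: "1 \<le> p"
    show "ennreal (p * y powr (p-1) * f y powr p) * indicator S y \<le> ennreal (f y * p * F y powr (p-1)) * indicator S y"
    proof (cases "y \<in> S")
      case True
      hence "0 < y" using S by auto
      thus ?thesis using True SF[OF True] ptw_ineq(2)[of y "f y" "F y" p] p p1 by (auto intro!: ennreal_leI)
    qed simp
  qed
  show "p \<le> 1 \<Longrightarrow> ennreal (I powr p) \<le> (\<integral>\<^sup>+y\<in>{0<..<x}. ennreal (p * y powr (p-1) * f y powr p) \<partial>lborel)"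
    unfolding G E
  proof (intro nn_integral_mono)
    fix y assume p1: "p \<le> 1"
    show "ennreal (f y * p * F y powr (p-1)) * indicator S y \<le> ennreal (p * y powr (p-1) * f y powr p) * indicator S y"
    proof (cases "y \<in> S")
      case True
      hence "0 < y" using S by auto
      thus ?thesis using True SF[OF True] ptw_ineq(3)[of y "f y" "F y" p] p p1 by (auto intro!: ennreal_leI)
    qed simp
  qed
  assume eqF: "\<And>t. 0 < t \<Longrightarrow> t < x \<Longrightarrow> 0 < f t \<Longrightarrow> (\<integral>\<^sup>+y\<in>{0<..<t}. ennreal (f y) \<partial>lborel) = ennreal (t * f t)"
  show "(\<integral>\<^sup>+y\<in>{0<..<x}. ennreal (p * y powr (p-1) * f y powr p) \<partial>lborel) = ennreal (I powr p)"
    unfolding G E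
  proof (intro nn_integral_cong)
    fix y
    show "ennreal (p * y powr (p-1) * f y powr p) * indicator S y = ennreal (f y * p * F y powr (p-1)) * indicator S y"
    proof (cases "y \<in> S")
      case True
      hence y: "0 < y" "y < x" using S by auto
      have "ennreal (F y) = ennreal (y * f y)" using Fint[OF True] eqF[OF y] SF[OF True] by simp
      moreover have "0 \<le> F y" using SF[OF True] y by (smt (verit) mult_pos_pos)
      ultimately have "F y = y * f y" using SF[OF True] y by (subst (asm) ennreal_inj) auto
      thus ?thesis using True SF[OF True] ptw_ineq(1)[of y "f y" "F y" p] p y by simp
    qed simp
  qed
qed

lemma sup_min: "(SUP n. ennreal (min a (real n)) * c) = ennreal a * c"
proof (rule antisym)
  show "(SUP n. ennreal (min a (real n)) * c) \<le> ennreal a * c"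
    by (rule SUP_least) (auto intro!: mult_right_mono ennreal_leI)
  obtain n where "a \<le> real n" using real_arch_simple by blast
  hence "ennreal a * c = ennreal (min a (real n)) * c" by simp
  thus "ennreal a * c \<le> (SUP n. ennreal (min a (real n)) * c)"
    by (metis (no_types, lifting) SUP_upper UNIV_I)
qed

lemma f0_meas:
  assumes "admissible l f" "0 < l"
  shows "(\<lambda>y. f y * indicator (ivl l) y) \<in> borel_measurable borel"
proof -
  have s: "ivl l \<inter> space lborel \<in> sets lborel" using assms(2) by (simp add: ivl_borel)
  have "f \<in> borel_measurable (restrict_space lborel (ivl l))" using assms(1) by (simp add: admissible_def)
  hence "(\<lambda>x. indicator (ivl l) x *\<^sub>R f x) \<in> borel_measurable lborel"
    using borel_measurable_restrict_space_iff[OF s] by blast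
  hence "(\<lambda>x. indicator (ivl l) x *\<^sub>R f x) \<in> borel_measurable borel" by simp
  thus ?thesis by (simp add: mult.commute)
qed

lemma ivl_sub: "x \<in> ivl l \<Longrightarrow> {0<..<x} \<subseteq> ivl l"
proof
  fix y assume x: "x \<in> ivl l" and y: "y \<in> {0<..<x}"
  have "ereal y < ereal x" using y by simp
  also have "ereal x < l" using x by (simp add: ivl_def)
  finally show "y \<in> ivl l" using y by (simp add: ivl_def)
qed

lemma pointwise:
  assumes adm: "admissible l f" and l: "0 < l" and p: "0 < p" and x: "x \<in> ivl l"
  shows "1 \<le> p \<Longrightarrow> (\<integral>\<^sup>+y\<in>{0<..<x}. ennreal (p * y powr (p-1) * f y powr p) \<partial>lborel)
            \<le> epowr (\<integral>\<^sup>+y\<in>{0<..<x}. ennreal (f y) \<partial>lborel) p"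
    and "p \<le> 1 \<Longrightarrow> epowr (\<integral>\<^sup>+y\<in>{0<..<x}. ennreal (f y) \<partial>lborel) p
            \<le> (\<integral>\<^sup>+y\<in>{0<..<x}. ennreal (p * y powr (p-1) * f y powr p) \<partial>lborel)"
proof -
  have x0: "0 < x" using x by (simp add: ivl_def)
  have sub: "{0<..<x} \<subseteq> ivl l" by (rule ivl_sub[OF x])
  have f0m[measurable]: "(\<lambda>y. f y * indicator (ivl l) y) \<in> borel_measurable borel" by (rule f0_meas[OF adm l])
  have nonneg: "\<And>y. 0 < y \<Longrightarrow> y < x \<Longrightarrow> 0 \<le> f y" using adm sub by (auto simp: admissible_def)
  have mono: "\<And>y z. 0 < y \<Longrightarrow> y \<le> z \<Longrightarrow> z < x \<Longrightarrow> f z \<le> f y"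
  proof -
    fix y z :: real assume "0 < y" "y \<le> z" "z < x"
    hence "y \<in> ivl l" "z \<in> ivl l" using sub by auto
    thus "f z \<le> f y" using adm \<open>y \<le> z\<close> by (auto simp: admissible_def)
  qed
  have fiv: "f y * indicator {0<..<x} y = (f y * indicator (ivl l) y) * indicator {0<..<x} y" for y
    using sub by (auto simp: indicator_def)
  have meas: "(\<lambda>y. f y * indicator {0<..<x} y) \<in> borel_measurable borel"
    unfolding fiv by measurable
  define Fe where "Fe = (\<integral>\<^sup>+y\<in>{0<..<x}. ennreal (f y) \<partial>lborel)"
  define Ge where "Ge = (\<integral>\<^sup>+y\<in>{0<..<x}. ennreal (p * y powr (p-1) * f y powr p) \<partial>lborel)"
  have fincase: "(1 \<le> p \<longrightarrow> Ge \<le> epowr Fe p) \<and> (p \<le> 1 \<longrightarrow> epowr Fe p \<le> Ge)" if fin: "Fe \<noteq> top"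
  proof -
    define I where "I = enn2real Fe"
    have FI: "Fe = ennreal I" using fin by (simp add: I_def less_top)
    have I0: "0 \<le> I" by (simp add: I_def)
    have ep: "epowr Fe p = ennreal (I powr p)" using fin by (simp add: epowr_def I_def)
    show ?thesis using pw_fin(1,2)[OF x0 p meas nonneg mono FI[unfolded Fe_def] I0] ep
      by (simp add: Ge_def Fe_def)
  qed
  show "1 \<le> p \<Longrightarrow> Ge \<le> epowr Fe p"
  proof (cases "Fe = top")
    case True thus ?thesis by (simp add: epowr_def)
  qed (use fincase in auto)
  show "p \<le> 1 \<Longrightarrow> epowr Fe p \<le> Ge"
  proof (cases "Fe = top")
    case False thus "p \<le> 1 \<Longrightarrow> epowr Fe p \<le> Ge" using fincase by auto
  next
    case True
    assume p1: "p \<le> 1"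
    show ?thesis
    proof (rule ccontr)
      assume "\<not> epowr Fe p \<le> Ge"
      hence Gfin: "Ge \<noteq> top" by (auto simp: top_unique)
      define G where "G = enn2real Ge"
      have GG: "Ge = ennreal G" using Gfin by (simp add: G_def less_top)
      have G0: "0 \<le> G" by (simp add: G_def)
      define fn where "fn n y = min (f y) (real n)" for n :: nat and y
      have bnd: "(\<integral>\<^sup>+y\<in>{0<..<x}. ennreal (fn n y) \<partial>lborel) \<le> ennreal (G powr (1/p))" for n
      proof -
        define Fn where "Fn = (\<integral>\<^sup>+y\<in>{0<..<x}. ennreal (fn n y) \<partial>lborel)"
        have "Fn \<le> (\<integral>\<^sup>+y\<in>{0<..<x}. ennreal (real n) \<partial>lborel)"
          unfolding Fn_def by (intro nn_integral_mono) (auto simp: fn_def indicator_def intro!: ennreal_leI)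
        also have "\<dots> = ennreal (real n) * ennreal x" using x0 by (simp add: nn_integral_cmult_indicator)
        finally have "Fn \<noteq> top" by (auto simp: top_unique ennreal_mult_eq_top_iff)
        define In where "In = enn2real Fn"
        have FIn: "Fn = ennreal In" using \<open>Fn \<noteq> top\<close> by (simp add: In_def less_top)
        have In0: "0 \<le> In" by (simp add: In_def)
        have fniv: "fn n y * indicator {0<..<x} y = min (f y * indicator (ivl l) y) (real n) * indicator {0<..<x} y" for y
          using sub by (auto simp: indicator_def fn_def)
        have measn: "(\<lambda>y. fn n y * indicator {0<..<x} y) \<in> borel_measurable borel"
          unfolding fniv by measurable
        have "ennreal (In powr p) \<le> (\<integral>\<^sup>+y\<in>{0<..<x}. ennreal (p * y powr (p-1) * fn n y powr p) \<partial>lborel)"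
        proof (rule pw_fin(2)[OF x0 p measn _ _ FIn[unfolded Fn_def] In0 p1])
          show "\<And>y. 0 < y \<Longrightarrow> y < x \<Longrightarrow> 0 \<le> fn n y" using nonneg by (simp add: fn_def)
          show "\<And>y z. 0 < y \<Longrightarrow> y \<le> z \<Longrightarrow> z < x \<Longrightarrow> fn n z \<le> fn n y"
            using mono by (simp add: fn_def) (metis min.coboundedI1)
        qed
        also have "\<dots> \<le> Ge" unfolding Ge_def
        proof (intro nn_integral_mono)
          fix y
          show "ennreal (p * y powr (p-1) * fn n y powr p) * indicator {0<..<x} y
              \<le> ennreal (p * y powr (p-1) * f y powr p) * indicator {0<..<x} y"
          proof (cases "y \<in> {0<..<x}")
            case True
            hence "0 \<le> fn n y" "fn n y \<le> f y" using nonneg by (auto simp: fn_def)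
            hence "fn n y powr p \<le> f y powr p" using p by (intro powr_mono2) auto
            thus ?thesis using True p by (auto intro!: ennreal_leI mult_left_mono)
          qed simp
        qed
        finally have "In powr p \<le> G" using GG G0 by simp
        hence "(In powr p) powr (1/p) \<le> G powr (1/p)" using p In0 by (intro powr_mono2) auto
        hence "In \<le> G powr (1/p)" using p In0 by (simp add: powr_powr)
        thus ?thesis using FIn by (simp add: Fn_def ennreal_leI)
      qed
      have "Fe = (\<integral>\<^sup>+y. (SUP n. ennreal (fn n y) * indicator {0<..<x} y) \<partial>lborel)"
        unfolding Fe_def by (rule nn_integral_cong) (simp add: fn_def sup_min)
      also have "\<dots> = (SUP n. (\<integral>\<^sup>+y\<in>{0<..<x}. ennreal (fn n y) \<partial>lborel))"
      proof (rule nn_integral_monotone_convergence_SUP)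
        show "incseq (\<lambda>n y. ennreal (fn n y) * indicator {0<..<x} y)"
          by (auto simp: incseq_def le_fun_def fn_def intro!: mult_right_mono ennreal_leI)
        fix n
        have fniv: "ennreal (fn n y) * indicator {0<..<x} y = ennreal (min (f y * indicator (ivl l) y) (real n)) * indicator {0<..<x} y" for y
          using sub by (auto simp: indicator_def fn_def)
        show "(\<lambda>y. ennreal (fn n y) * indicator {0<..<x} y) \<in> borel_measurable lborel"
          unfolding fniv by measurable
      qed
      also have "\<dots> \<le> ennreal (G powr (1/p))" by (rule SUP_least) (rule bnd)
      finally show False using True by (simp add: top_unique)
    qed
  qed
qed

lemma real_id1:
  fixes y a W p \<alpha> :: real
  assumes "0 < y" "0 \<le> a" "0 < \<alpha>"
  shows "p * y powr (p-1) * a powr p * (y powr (-\<alpha>) * W / \<alpha>) = p / \<alpha> * ((y * a) powr p * y powr (-\<alpha>) * W / y)"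
  using assms by (simp add: powr_mult powr_diff field_simps)

lemma hardyR_eq:
  assumes adm: "admissible l f" and l: "0 < l" and a: "0 < \<alpha>" and p: "0 < p"
  shows "ennreal (p / \<alpha>) * hardyR p \<alpha> l f
    = (\<integral>\<^sup>+x\<in>ivl l. (\<integral>\<^sup>+y\<in>{0<..<x}. ennreal (p * y powr (p-1) * f y powr p) \<partial>lborel) * ennreal (x powr (-\<alpha>) / x) \<partial>lborel)"
proof -
  define f0 where "f0 y = f y * indicator (ivl l) y" for y
  have f0m[measurable]: "f0 \<in> borel_measurable borel" unfolding f0_def[abs_def] by (rule f0_meas[OF adm l])
  have ivm[measurable]: "ivl l \<in> sets borel" using l by (simp add: ivl_borel)
  have f0eq: "y \<in> ivl l \<Longrightarrow> f0 y = f y" for y by (simp add: f0_def)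
  have fnn: "y \<in> ivl l \<Longrightarrow> 0 \<le> f y" for y using adm by (auto simp: admissible_def)
  define g0 where "g0 y = p * y powr (p-1) * f0 y powr p" for y
  have g0m[measurable]: "g0 \<in> borel_measurable borel" unfolding g0_def[abs_def] by measurable
  define h0 where "h0 y = (y * f0 y) powr p * y powr (-\<alpha>) * wt l \<alpha> y / y" for y
  have h0m[measurable]: "h0 \<in> borel_measurable borel" unfolding h0_def[abs_def] wt_def by measurable
  have "(\<integral>\<^sup>+x\<in>ivl l. (\<integral>\<^sup>+y\<in>{0<..<x}. ennreal (p * y powr (p-1) * f y powr p) \<partial>lborel) * ennreal (x powr (-\<alpha>) / x) \<partial>lborel)
      = (\<integral>\<^sup>+x\<in>ivl l. (\<integral>\<^sup>+y\<in>{0<..<x}. ennreal (g0 y) \<partial>lborel) * ennreal (x powr (-\<alpha>) / x) \<partial>lborel)"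
  proof (rule nn_integral_cong)
    fix x
    show "(\<integral>\<^sup>+y\<in>{0<..<x}. ennreal (p * y powr (p-1) * f y powr p) \<partial>lborel) * ennreal (x powr (-\<alpha>) / x) * indicator (ivl l) x
        = (\<integral>\<^sup>+y\<in>{0<..<x}. ennreal (g0 y) \<partial>lborel) * ennreal (x powr (-\<alpha>) / x) * indicator (ivl l) x"
    proof (cases "x \<in> ivl l")
      case True
      have "(\<integral>\<^sup>+y\<in>{0<..<x}. ennreal (p * y powr (p-1) * f y powr p) \<partial>lborel) = (\<integral>\<^sup>+y\<in>{0<..<x}. ennreal (g0 y) \<partial>lborel)"
      proof (rule nn_integral_cong)
        fix y show "ennreal (p * y powr (p-1) * f y powr p) * indicator {0<..<x} y = ennreal (g0 y) * indicator {0<..<x} y"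
          using ivl_sub[OF True] f0eq[of y] by (cases "y \<in> {0<..<x}") (auto simp: g0_def)
      qed
      thus ?thesis by simp
    qed simp
  qed
  also have "\<dots> = (\<integral>\<^sup>+y\<in>ivl l. ennreal (g0 y) * ennreal (y powr (-\<alpha>) * wt l \<alpha> y / \<alpha>) \<partial>lborel)"
    by (rule tonelli[OF g0m a l])
  also have "\<dots> = (\<integral>\<^sup>+y. ennreal (p / \<alpha>) * (ennreal (h0 y) * indicator (ivl l) y) \<partial>lborel)"
  proof (rule nn_integral_cong)
    fix y
    show "ennreal (g0 y) * ennreal (y powr (-\<alpha>) * wt l \<alpha> y / \<alpha>) * indicator (ivl l) y
        = ennreal (p / \<alpha>) * (ennreal (h0 y) * indicator (ivl l) y)"
    proof (cases "y \<in> ivl l")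
      case True
      have y0: "0 < y" using True by (simp add: ivl_def)
      have w: "0 < wt l \<alpha> y" using wt_bounds[OF a l True] by simp
      have fy: "0 \<le> f0 y" using fnn[OF True] f0eq[OF True] by simp
      have n1: "0 \<le> g0 y" using p fy by (simp add: g0_def)
      have n2: "0 \<le> y powr (-\<alpha>) * wt l \<alpha> y / \<alpha>" using w a by simp
      have n3: "0 \<le> h0 y" using w y0 fy by (simp add: h0_def)
      have "ennreal (g0 y) * ennreal (y powr (-\<alpha>) * wt l \<alpha> y / \<alpha>) = ennreal (g0 y * (y powr (-\<alpha>) * wt l \<alpha> y / \<alpha>))"
        using n1 n2 by (rule ennreal_mult[symmetric])
      also have "g0 y * (y powr (-\<alpha>) * wt l \<alpha> y / \<alpha>) = p / \<alpha> * h0 y"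
        unfolding g0_def h0_def by (rule real_id1[OF y0 fy a])
      also have "ennreal (p / \<alpha> * h0 y) = ennreal (p / \<alpha>) * ennreal (h0 y)"
        using n3 p a by (intro ennreal_mult) auto
      finally show ?thesis using True by simp
    qed simp
  qed
  also have "\<dots> = ennreal (p / \<alpha>) * (\<integral>\<^sup>+y. ennreal (h0 y) * indicator (ivl l) y \<partial>lborel)"
    by (rule nn_integral_cmult) measurable
  also have "(\<integral>\<^sup>+y. ennreal (h0 y) * indicator (ivl l) y \<partial>lborel) = hardyR p \<alpha> l f"
    unfolding hardyR_def by (rule nn_integral_cong) (auto simp: h0_def f0eq indicator_def)
  finally show ?thesis by simp
qed

lemma indic_adm:
  assumes A: "0 < A" and c: "0 < c" "ereal c < l"
  shows "admissible l (\<lambda>x. A * indicator {0<..<c} x)"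
  unfolding admissible_def
proof (intro conjI ballI impI)
  show "(\<lambda>x. A * indicator {0<..<c} x) \<in> borel_measurable (restrict_space lborel (ivl l))"
    by (rule measurable_restrict_space1) measurable
  fix x assume "x \<in> ivl l"
  thus "0 \<le> A * indicator {0<..<c} x" using A by (simp add: indicator_def)
  fix y assume "y \<in> ivl l" "x \<le> y"
  thus "A * indicator {0<..<c} y \<le> A * indicator {0<..<c} x"
    using A \<open>x \<in> ivl l\<close> by (auto simp: indicator_def ivl_def)
qed

lemma indic_eq:
  assumes A: "0 < A" and c: "0 < c" "ereal c < l" and l: "0 < l" and p: "0 < p" and x: "x \<in> ivl l"
  shows "(\<integral>\<^sup>+y\<in>{0<..<x}. ennreal (p * y powr (p-1) * (A * indicator {0<..<c} y) powr p) \<partial>lborel)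
       = epowr (\<integral>\<^sup>+y\<in>{0<..<x}. ennreal (A * indicator {0<..<c} y) \<partial>lborel) p"
proof -
  define f where "f y = A * indicator {0<..<c} y" for y :: real
  have x0: "0 < x" using x by (simp add: ivl_def)
  have meas: "(\<lambda>y. f y * indicator {0<..<x} y) \<in> borel_measurable borel"
    unfolding f_def by measurable
  have nonneg: "\<And>y. 0 < y \<Longrightarrow> y < x \<Longrightarrow> 0 \<le> f y" using A by (simp add: f_def)
  have mono: "\<And>y z. 0 < y \<Longrightarrow> y \<le> z \<Longrightarrow> z < x \<Longrightarrow> f z \<le> f y"
    using A by (auto simp: f_def indicator_def)
  define Fe where "Fe = (\<integral>\<^sup>+y\<in>{0<..<x}. ennreal (f y) \<partial>lborel)"
  have "Fe \<le> (\<integral>\<^sup>+y\<in>{0<..<x}. ennreal A \<partial>lborel)"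
    unfolding Fe_def using A by (intro nn_integral_mono) (auto simp: f_def indicator_def)
  also have "\<dots> = ennreal A * ennreal x" using x0 by (simp add: nn_integral_cmult_indicator)
  finally have fin: "Fe \<noteq> top" by (auto simp: top_unique ennreal_mult_eq_top_iff)
  define I where "I = enn2real Fe"
  have FI: "Fe = ennreal I" using fin by (simp add: I_def less_top)
  have I0: "0 \<le> I" by (simp add: I_def)
  have ep: "epowr Fe p = ennreal (I powr p)" using fin by (simp add: epowr_def I_def)
  have eqF: "(\<integral>\<^sup>+y\<in>{0<..<t}. ennreal (f y) \<partial>lborel) = ennreal (t * f t)"
    if t: "0 < t" "t < x" "0 < f t" for t
  proof -
    have tc: "t < c" using t(3) by (cases "t < c") (auto simp: f_def indicator_def)
    have "(\<integral>\<^sup>+y\<in>{0<..<t}. ennreal (f y) \<partial>lborel) = (\<integral>\<^sup>+y\<in>{0<..<t}. ennreal A \<partial>lborel)"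
      by (rule nn_integral_cong) (use tc in \<open>auto simp: f_def indicator_def\<close>)
    also have "\<dots> = ennreal A * ennreal t" using t by (simp add: nn_integral_cmult_indicator)
    also have "\<dots> = ennreal (t * f t)" using A t tc by (simp add: f_def ennreal_mult[symmetric] mult.commute)
    finally show ?thesis .
  qed
  have "(\<integral>\<^sup>+y\<in>{0<..<x}. ennreal (p * y powr (p-1) * f y powr p) \<partial>lborel) = ennreal (I powr p)"
    by (rule pw_fin(3)[OF x0 p meas nonneg mono FI[unfolded Fe_def] I0 eqF])
  thus ?thesis using ep by (simp add: Fe_def f_def)
qed

lemma indic_R:
  assumes A: "0 < A" and c: "0 < c" "ereal c < l" and l: "0 < l" and a: "0 < \<alpha>" and pa: "\<alpha> < p"
  shows "0 < hardyR p \<alpha> l (\<lambda>x. A * indicator {0<..<c} x)" "hardyR p \<alpha> l (\<lambda>x. A * indicator {0<..<c} x) < top"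
proof -
  have ivm[measurable]: "ivl l \<in> sets borel" using l by (simp add: ivl_borel)
  define h where "h x = (x * (A * indicator {0<..<c} x)) powr p * x powr (-\<alpha>) * wt l \<alpha> x / x" for x :: real
  have hm[measurable]: "h \<in> borel_measurable borel" unfolding h_def[abs_def] wt_def by measurable
  have R: "hardyR p \<alpha> l (\<lambda>x. A * indicator {0<..<c} x) = (\<integral>\<^sup>+x. ennreal (h x) * indicator (ivl l) x \<partial>lborel)"
    by (simp add: hardyR_def h_def)
  have civ: "{0<..<c} \<subseteq> ivl l" using c by (intro ivl_sub) (simp add: ivl_def)
  have hpos: "0 < h x" if "x \<in> {0<..<c}" for x
  proof -
    have "x \<in> ivl l" using that civ by auto
    hence "0 < wt l \<alpha> x" using wt_bounds[OF a l] by simp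
    thus ?thesis using that A by (simp add: h_def)
  qed
  have hle: "ennreal (h x) * indicator (ivl l) x \<le> ennreal (A powr p * x powr (p - \<alpha> - 1)) * indicator {0..c} x" for x
  proof (cases "x \<in> ivl l \<and> x \<in> {0<..<c}")
    case True
    hence x0: "0 < x" and w: "wt l \<alpha> x \<le> 1" "0 < wt l \<alpha> x" using wt_bounds[OF a l] by auto
    have "h x = A powr p * x powr (p - \<alpha> - 1) * wt l \<alpha> x"
      using True x0 A by (simp add: h_def powr_mult powr_diff powr_add powr_minus field_simps)
    also have "\<dots> \<le> A powr p * x powr (p - \<alpha> - 1)"
      using w by (intro mult_left_le) auto
    finally show ?thesis using True by (auto intro!: ennreal_leI simp: indicator_def)
  next
    case False
    hence "ennreal (h x) * indicator (ivl l) x = 0" by (auto simp: h_def indicator_def)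
    thus ?thesis by (metis zero_le)
  qed
  have "((\<lambda>x. x powr (p - \<alpha> - 1)) has_integral (c powr (p - \<alpha> - 1 + 1) / (p - \<alpha> - 1 + 1))) {0..c}"
    by (rule has_integral_powr_from_0) (use pa c in auto)
  hence "((\<lambda>x. A powr p * x powr (p - \<alpha> - 1)) has_integral A powr p * (c powr (p - \<alpha> - 1 + 1) / (p - \<alpha> - 1 + 1))) {0..c}"
    by (rule has_integral_mult_right)
  hence "(\<integral>\<^sup>+x\<in>{0..c}. ennreal (A powr p * x powr (p - \<alpha> - 1)) \<partial>lborel) = ennreal (A powr p * (c powr (p - \<alpha> - 1 + 1) / (p - \<alpha> - 1 + 1)))"
    by (intro nn_integral_has_integral_lebesgue') auto
  moreover have "hardyR p \<alpha> l (\<lambda>x. A * indicator {0<..<c} x) \<le> (\<integral>\<^sup>+x\<in>{0..c}. ennreal (A powr p * x powr (p - \<alpha> - 1)) \<partial>lborel)"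
    unfolding R by (intro nn_integral_mono hle)
  ultimately show "hardyR p \<alpha> l (\<lambda>x. A * indicator {0<..<c} x) < top"
    by (metis ennreal_less_top order.strict_trans1)
  show "0 < hardyR p \<alpha> l (\<lambda>x. A * indicator {0<..<c} x)"
  proof (rule ccontr)
    assume "\<not> 0 < hardyR p \<alpha> l (\<lambda>x. A * indicator {0<..<c} x)"
    hence "(\<integral>\<^sup>+x. ennreal (h x) * indicator (ivl l) x \<partial>lborel) = 0" using R by (simp add: zero_less_iff_neq_zero)
    hence "AE x in lborel. ennreal (h x) * indicator (ivl l) x = 0"
      by (subst (asm) nn_integral_0_iff_AE) auto
    hence "AE x in lborel. x \<notin> {0<..<c}"
    proof eventually_elim
      case (elim x)
      show ?case
      proof
        assume xc: "x \<in> {0<..<c}"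
        hence "0 < h x" "x \<in> ivl l" using hpos civ by auto
        thus False using elim by simp
      qed
    qed
    hence "emeasure lborel {0<..<c} = 0"
      by (subst (asm) AE_iff_measurable[of "{0<..<c}"]) auto
    thus False using c by simp
  qed
qed

theorem theorem3p2:
  fixes p \<alpha> :: real and l :: ereal
  assumes "0 < p" and "0 < \<alpha>" and "\<alpha> < p" and "0 < l"
  shows
    "(\<forall>f. admissible l f \<longrightarrow> 1 \<le> p \<longrightarrow>
         hardyL p \<alpha> l f \<ge> ennreal (p / \<alpha>) * hardyR p \<alpha> l f)
   \<and> (\<forall>f. admissible l f \<longrightarrow> p \<le> 1 \<longrightarrow>
         hardyL p \<alpha> l f \<le> ennreal (p / \<alpha>) * hardyR p \<alpha> l f)
   \<and> (\<forall>A c. 0 < A \<longrightarrow> 0 < c \<longrightarrow> ereal c < l \<longrightarrow>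
         hardyL p \<alpha> l (\<lambda>x. A * indicator {0<..<c} x)
           = ennreal (p / \<alpha>) * hardyR p \<alpha> l (\<lambda>x. A * indicator {0<..<c} x))
   \<and> (1 \<le> p \<longrightarrow> (\<forall>C::real. C > p / \<alpha> \<longrightarrow>
         (\<exists>f. admissible l f \<and> hardyL p \<alpha> l f < ennreal C * hardyR p \<alpha> l f)))
   \<and> (p \<le> 1 \<longrightarrow> (\<forall>C::real. 0 \<le> C \<longrightarrow> C < p / \<alpha> \<longrightarrow>
         (\<exists>f. admissible l f \<and> hardyL p \<alpha> l f > ennreal C * hardyR p \<alpha> l f)))"
proof -
  note p = assms(1) and a = assms(2) and pa = assms(3) and l = assms(4)
  have partA: "hardyL p \<alpha> l f \<ge> ennreal (p / \<alpha>) * hardyR p \<alpha> l f" if adm: "admissible l f" and p1: "1 \<le> p" for f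
  proof -
    have "ennreal (p / \<alpha>) * hardyR p \<alpha> l f
      = (\<integral>\<^sup>+x\<in>ivl l. (\<integral>\<^sup>+y\<in>{0<..<x}. ennreal (p * y powr (p-1) * f y powr p) \<partial>lborel) * ennreal (x powr (-\<alpha>) / x) \<partial>lborel)"
      by (rule hardyR_eq[OF adm l a p])
    also have "\<dots> \<le> hardyL p \<alpha> l f" unfolding hardyL_def
    proof (intro nn_integral_mono)
      fix x show "(\<integral>\<^sup>+y\<in>{0<..<x}. ennreal (p * y powr (p-1) * f y powr p) \<partial>lborel) * ennreal (x powr (-\<alpha>) / x) * indicator (ivl l) x
        \<le> epowr (\<integral>\<^sup>+y\<in>{0<..<x}. ennreal (f y) \<partial>lborel) p * ennreal (x powr (-\<alpha>) / x) * indicator (ivl l) x"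
      proof (cases "x \<in> ivl l")
        case True
        thus ?thesis using pointwise(1)[OF adm l p True p1] by (simp add: mult_right_mono)
      qed simp
    qed
    finally show ?thesis .
  qed
  have partB: "hardyL p \<alpha> l f \<le> ennreal (p / \<alpha>) * hardyR p \<alpha> l f" if adm: "admissible l f" and p1: "p \<le> 1" for f
  proof -
    have "hardyL p \<alpha> l f \<le> (\<integral>\<^sup>+x\<in>ivl l. (\<integral>\<^sup>+y\<in>{0<..<x}. ennreal (p * y powr (p-1) * f y powr p) \<partial>lborel) * ennreal (x powr (-\<alpha>) / x) \<partial>lborel)"
      unfolding hardyL_def
    proof (intro nn_integral_mono)
      fix x show "epowr (\<integral>\<^sup>+y\<in>{0<..<x}. ennreal (f y) \<partial>lborel) p * ennreal (x powr (-\<alpha>) / x) * indicator (ivl l) x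
        \<le> (\<integral>\<^sup>+y\<in>{0<..<x}. ennreal (p * y powr (p-1) * f y powr p) \<partial>lborel) * ennreal (x powr (-\<alpha>) / x) * indicator (ivl l) x"
      proof (cases "x \<in> ivl l")
        case True
        thus ?thesis using pointwise(2)[OF adm l p True p1] by (simp add: mult_right_mono)
      qed simp
    qed
    also have "\<dots> = ennreal (p / \<alpha>) * hardyR p \<alpha> l f"
      by (rule hardyR_eq[OF adm l a p, symmetric])
    finally show ?thesis .
  qed
  have partC: "hardyL p \<alpha> l (\<lambda>x. A * indicator {0<..<c} x)
           = ennreal (p / \<alpha>) * hardyR p \<alpha> l (\<lambda>x. A * indicator {0<..<c} x)"
    if A: "0 < A" and c: "0 < c" "ereal c < l" for A c
  proof -
    have adm: "admissible l (\<lambda>x. A * indicator {0<..<c} x)" by (rule indic_adm[OF A c])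
    have "hardyL p \<alpha> l (\<lambda>x. A * indicator {0<..<c} x)
      = (\<integral>\<^sup>+x\<in>ivl l. (\<integral>\<^sup>+y\<in>{0<..<x}. ennreal (p * y powr (p-1) * (A * indicator {0<..<c} y) powr p) \<partial>lborel) * ennreal (x powr (-\<alpha>) / x) \<partial>lborel)"
      unfolding hardyL_def
    proof (intro nn_integral_cong)
      fix x show "epowr (\<integral>\<^sup>+y\<in>{0<..<x}. ennreal (A * indicator {0<..<c} y) \<partial>lborel) p * ennreal (x powr (-\<alpha>) / x) * indicator (ivl l) x
        = (\<integral>\<^sup>+y\<in>{0<..<x}. ennreal (p * y powr (p-1) * (A * indicator {0<..<c} y) powr p) \<partial>lborel) * ennreal (x powr (-\<alpha>) / x) * indicator (ivl l) x"
      proof (cases "x \<in> ivl l")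
        case True
        thus ?thesis using indic_eq[OF A c l p True] by simp
      qed simp
    qed
    also have "\<dots> = ennreal (p / \<alpha>) * hardyR p \<alpha> l (\<lambda>x. A * indicator {0<..<c} x)"
      by (rule hardyR_eq[OF adm l a p, symmetric])
    finally show ?thesis .
  qed
  obtain c where c: "0 < c" "ereal c < l"
  proof (cases l)
    case (real L)
    thus ?thesis using l that[of "L/2"] by auto
  next
    case PInf
    thus ?thesis using that[of 1] by auto
  next
    case MInf
    thus ?thesis using l by auto
  qed
  define f1 where "f1 = (\<lambda>x. (1::real) * indicator {0<..<c} x)"
  have adm1: "admissible l f1" unfolding f1_def by (rule indic_adm[OF _ c]) simp
  have R1: "0 < hardyR p \<alpha> l f1" "hardyR p \<alpha> l f1 < top"
    unfolding f1_def using indic_R[OF _ c l a pa, of 1] by auto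
  define r where "r = enn2real (hardyR p \<alpha> l f1)"
  have Rr: "hardyR p \<alpha> l f1 = ennreal r" using R1 by (simp add: r_def less_top)
  have r0: "0 < r" using R1(1) unfolding Rr by (simp only: ennreal_less_zero_iff)
  have "hardyL p \<alpha> l f1 = ennreal (p / \<alpha>) * hardyR p \<alpha> l f1"
    unfolding f1_def by (rule partC[OF zero_less_one c])
  also have "\<dots> = ennreal (p / \<alpha> * r)"
    unfolding Rr using p a r0 by (intro ennreal_mult[symmetric]) auto
  finally have L1: "hardyL p \<alpha> l f1 = ennreal (p / \<alpha> * r)" .
  have partD: "hardyL p \<alpha> l f1 < ennreal C * hardyR p \<alpha> l f1" if C: "C > p / \<alpha>" for C
  proof -
    have C0: "0 \<le> C" using C p a by (smt (verit) divide_pos_pos)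
    have C1: "0 < C" using C p a by (smt (verit) divide_pos_pos)
    have "ennreal (p / \<alpha> * r) < ennreal (C * r)"
      by (rule ennreal_lessI) (use C1 r0 in simp, rule mult_strict_right_mono[OF C r0])
    also have "ennreal (C * r) = ennreal C * hardyR p \<alpha> l f1"
      unfolding Rr using C0 r0 by (intro ennreal_mult) auto
    finally show ?thesis using L1 by simp
  qed
  have partE: "hardyL p \<alpha> l f1 > ennreal C * hardyR p \<alpha> l f1" if C0: "0 \<le> C" and C: "C < p / \<alpha>" for C
  proof -
    have "ennreal (C * r) < ennreal (p / \<alpha> * r)"
      by (rule ennreal_lessI) (use r0 p a in simp, rule mult_strict_right_mono[OF C r0])
    moreover have "ennreal (C * r) = ennreal C * hardyR p \<alpha> l f1"
      unfolding Rr using C0 r0 by (intro ennreal_mult) auto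
    ultimately show ?thesis using L1 by simp
  qed
  show ?thesis
  proof (intro conjI allI impI)
    fix f assume "admissible l f" "1 \<le> p"
    thus "ennreal (p / \<alpha>) * hardyR p \<alpha> l f \<le> hardyL p \<alpha> l f" by (rule partA)
  next
    fix f assume "admissible l f" "p \<le> 1"
    thus "hardyL p \<alpha> l f \<le> ennreal (p / \<alpha>) * hardyR p \<alpha> l f" by (rule partB)
  next
    fix A c :: real assume "0 < A" "0 < c" "ereal c < l"
    thus "hardyL p \<alpha> l (\<lambda>x. A * indicator {0<..<c} x)
           = ennreal (p / \<alpha>) * hardyR p \<alpha> l (\<lambda>x. A * indicator {0<..<c} x)" by (rule partC)
  next
    fix C :: real assume "1 \<le> p" "p / \<alpha> < C"
    show "\<exists>f. admissible l f \<and> hardyL p \<alpha> l f < ennreal C * hardyR p \<alpha> l f"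
      using adm1 partD[OF \<open>p / \<alpha> < C\<close>] by blast
  next
    fix C :: real assume "p \<le> 1" "0 \<le> C" "C < p / \<alpha>"
    show "\<exists>f. admissible l f \<and> ennreal C * hardyR p \<alpha> l f < hardyL p \<alpha> l f"
      using adm1 partE[OF \<open>0 \<le> C\<close> \<open>C < p / \<alpha>\<close>] by blast
  qed
qed

end
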